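(* Let $\mathcal P$ be a pre-Hahn-localizable family of probability measures on $(\Omega,\mathcal F)$ with a localization $\mathcal Q$ whose supports $\{S_Q\}_{Q\in\mathcal Q}$ are pairwise disjoint. Then for every $A\in\mathcal H_{\mathcal F}^{\mathcal Q}$ and every $Q\in\mathcal Q$ we have $A\cap S_Q\in\mathcal F$.
   Context: $\mathcal A\lll\mathcal B$ means every $A\in\mathcal A$ is absolutely continuous w.r.t. some $B\in\mathcal B$; $\mathrm{sconv}$ denotes countable convex combinations. $\mathcal P$ is pre-Hahn-localizable with localization $\mathcal Q$ (probability measures on $\mathcal F$) and supports $S_Q\in\mathcal F$ if $Q(S_R)=\delta_{QR}$ for $Q,R\in\mathcal Q$ and $\mathcal Q\lll\mathcal P\lll\mathrm{sconv}(\mathcal Q)$. The Hahn-extension is $\mathcal H_{\mathcal F}^{\mathcal Q}=\sigma\big(\mathcal F\cup\{\bigcup_{Q\in\mathcal Q}E_Q:E_Q\in\mathcal F,E_Q\subseteq S_Q\}\big)$. *)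

theory Defs
  imports "HOL-Probability.Probability"
begin

definition prob_on :: "'a set \<Rightarrow> 'a set set \<Rightarrow> 'a measure \<Rightarrow> bool" where
  "prob_on \<Omega> F M \<longleftrightarrow> prob_space M \<and> space M = \<Omega> \<and> sets M = F"

text \<open>calA <<< calB: every A in calA is absolutely continuous w.r.t. some B in calB
  (library: absolutely_continuous B A means null_sets B is contained in null_sets A).\<close>
definition lll :: "'a measure set \<Rightarrow> 'a measure set \<Rightarrow> bool" where
  "lll \<A> \<B> \<longleftrightarrow> (\<forall>A\<in>\<A>. \<exists>B\<in>\<B>. absolutely_continuous B A)"

definition sconv :: "'a set \<Rightarrow> 'a set set \<Rightarrow> 'a measure set \<Rightarrow> 'a measure set" where
  "sconv \<Omega> F \<Q> = {R. space R = \<Omega> \<and> sets R = F \<and>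
     (\<exists>(c::nat \<Rightarrow> real) q. (\<forall>n. 0 \<le> c n) \<and> c sums 1 \<and> (\<forall>n. q n \<in> \<Q>) \<and>
        (\<forall>A\<in>F. emeasure R A = (\<Sum>n. ennreal (c n) * emeasure (q n) A)))}"

definition localization ::
  "'a set \<Rightarrow> 'a set set \<Rightarrow> 'a measure set \<Rightarrow> 'a measure set \<Rightarrow> ('a measure \<Rightarrow> 'a set) \<Rightarrow> bool" where
  "localization \<Omega> F \<P> \<Q> S \<longleftrightarrow>
     (\<forall>Q\<in>\<Q>. prob_on \<Omega> F Q) \<and>
     (\<forall>Q\<in>\<Q>. S Q \<in> F) \<and>
     (\<forall>Q\<in>\<Q>. \<forall>R\<in>\<Q>. measure Q (S R) = (if Q = R then 1 else 0)) \<and>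
     lll \<Q> \<P> \<and> lll \<P> (sconv \<Omega> F \<Q>)"

definition pre_hahn_localizable :: "'a set \<Rightarrow> 'a set set \<Rightarrow> 'a measure set \<Rightarrow> bool" where
  "pre_hahn_localizable \<Omega> F \<P> \<longleftrightarrow> (\<exists>\<Q> S. localization \<Omega> F \<P> \<Q> S)"

definition hahn_extension ::
  "'a set \<Rightarrow> 'a set set \<Rightarrow> 'a measure set \<Rightarrow> ('a measure \<Rightarrow> 'a set) \<Rightarrow> 'a set set" where
  "hahn_extension \<Omega> F \<Q> S = sigma_sets \<Omega>
     (F \<union> {(\<Union>Q\<in>\<Q>. E Q) | E. \<forall>Q\<in>\<Q>. E Q \<in> F \<and> E Q \<subseteq> S Q})"

end

theory Submission
  imports Defs
begin

theorem lemma4p2: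
  fixes \<Omega> :: "'a set" and F :: "'a set set" and \<P> \<Q> :: "'a measure set"
    and S :: "'a measure \<Rightarrow> 'a set"
  assumes "sigma_algebra \<Omega> F"
    and "\<forall>P\<in>\<P>. prob_on \<Omega> F P"
    and "pre_hahn_localizable \<Omega> F \<P>"
    and "localization \<Omega> F \<P> \<Q> S"
    and "\<forall>Q\<in>\<Q>. \<forall>R\<in>\<Q>. Q \<noteq> R \<longrightarrow> S Q \<inter> S R = {}"
    and "A \<in> hahn_extension \<Omega> F \<Q> S"
    and "Q \<in> \<Q>"
  shows "A \<inter> S Q \<in> F"
proof -
  interpret sa: sigma_algebra \<Omega> F by fact
  have SQ: "S Q \<in> F" using assms(4,7) unfolding localization_def by blast
  have SQsub: "S Q \<subseteq> \<Omega>" using SQ sa.sets_into_space by blast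
  have "A \<in> sigma_sets \<Omega> (F \<union> {(\<Union>Q\<in>\<Q>. E Q) | E. \<forall>Q\<in>\<Q>. E Q \<in> F \<and> E Q \<subseteq> S Q})"
    using assms(6) unfolding hahn_extension_def by simp
  then show ?thesis
  proof (induct rule: sigma_sets.induct)
    case (Basic a)
    then show ?case
    proof
      assume "a \<in> F" then show ?thesis using SQ by blast
    next
      assume "a \<in> {(\<Union>Q\<in>\<Q>. E Q) | E. \<forall>Q\<in>\<Q>. E Q \<in> F \<and> E Q \<subseteq> S Q}"
      then obtain E where a: "a = (\<Union>Q\<in>\<Q>. E Q)" and E: "\<forall>Q\<in>\<Q>. E Q \<in> F \<and> E Q \<subseteq> S Q"
        by blast
      have "a \<inter> S Q = E Q"
      proof
        show "a \<inter> S Q \<subseteq> E Q"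
        proof
          fix x assume x: "x \<in> a \<inter> S Q"
          then obtain R where R: "R \<in> \<Q>" "x \<in> E R" using a by blast
          show "x \<in> E Q"
          proof (cases "R = Q")
            case True then show ?thesis using R by simp
          next
            case False
            then have "S Q \<inter> S R = {}" using assms(5,7) R(1) by blast
            moreover have "x \<in> S R" using E R by blast
            ultimately show ?thesis using x by blast
          qed
        qed
        show "E Q \<subseteq> a \<inter> S Q" using E a assms(7) by blast
      qed
      then show ?thesis using E assms(7) by simp
    qed
  next
    case Empty then show ?case by simp
  next
    case (Compl a)
    have "(\<Omega> - a) \<inter> S Q = S Q - (a \<inter> S Q)" using SQsub by blast
    then show ?case using Compl SQ sa.Diff by simp
  next
    case (Union a)
    have "(\<Union>i. a i) \<inter> S Q = (\<Union>i. a i \<inter> S Q)" by blast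
    moreover have "(\<Union>i. a i \<inter> S Q) \<in> F" using Union by (intro sa.countable_UN) auto
    ultimately show ?case by simp
  qed
qed

end
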